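(* Let $n,k,d$ be positive integers with $d<n$. For every $\mathcal{A}\subset 2^{[n]}$ with $\mathrm{VC}(\triangle\mathcal{A}^k)\le d$, we have $|\mathcal{A}|\le p(n,k,d)$. Moreover there exist families $\mathcal{A}\subset 2^{[n]}$ with $\mathrm{VC}(\triangle\mathcal{A}^k)\le d$ and $|\mathcal{A}|=p(n,k,d)$. That is, the maximum size of $\mathcal{A}\subset2^{[n]}$ with $\mathrm{VC}(\triangle\mathcal{A}^k)\le d$ equals $p(n,k,d)$.
   Context: $[n]=\{1,\dots,n\}$. $\mathrm{VC}(\mathcal{F})$ is the largest cardinality of a $Y\subset[n]$ with $\{S\cap Y:S\in\mathcal{F}\}=2^Y$. $\triangle\mathcal{A}^k=\{S_1\triangle\cdots\triangle S_k: S_i\in\mathcal{A}\}$ and $\cup\mathcal{A}^k=\{S_1\cup\cdots\cup S_k: S_i\in\mathcal{A}\}$ (the $S_i$ need not be distinct). A family $\mathcal{F}\subset2^{[n]}$ is $k$-wise $(n-d)$-union if every member of $\cup\mathcal{F}^k$ has cardinality at most $d$. $p(n,k,d)$ denotes the maximum size of a $k$-wise $(n-d)$-union family $\mathcal{F}\subset 2^{[n]}$. *)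

theory Defs
  imports Main
begin

fun symdiff_pow :: "'a set set \<Rightarrow> nat \<Rightarrow> 'a set set" where
  "symdiff_pow A 0 = {{}}"
| "symdiff_pow A (Suc k) = {(S - T) \<union> (T - S) | S T. S \<in> A \<and> T \<in> symdiff_pow A k}"

fun union_pow :: "'a set set \<Rightarrow> nat \<Rightarrow> 'a set set" where
  "union_pow A 0 = {{}}"
| "union_pow A (Suc k) = {S \<union> T | S T. S \<in> A \<and> T \<in> union_pow A k}"

definition shatters :: "'a set set \<Rightarrow> 'a set \<Rightarrow> bool" where
  "shatters F Y \<longleftrightarrow> {S \<inter> Y | S. S \<in> F} = Pow Y"

text \<open>VC dimension of a family F \<subseteq> 2^[n]: largest cardinality of a shattered Y \<subseteq> [n] (0 if none, via Sup {} = 0 on nat).\<close>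
definition VC :: "nat \<Rightarrow> nat set set \<Rightarrow> nat" where
  "VC n F = Sup {card Y | Y. Y \<subseteq> {1..n} \<and> shatters F Y}"

definition kwise_union_family :: "nat \<Rightarrow> nat \<Rightarrow> nat \<Rightarrow> nat set set \<Rightarrow> bool" where
  "kwise_union_family n k d F \<longleftrightarrow> F \<subseteq> Pow {1..n} \<and> (\<forall>U \<in> union_pow F k. card U \<le> d)"

definition p :: "nat \<Rightarrow> nat \<Rightarrow> nat \<Rightarrow> nat" where
  "p n k d = Max {card F | F. kwise_union_family n k d F}"

end

theory Submission
  imports Defs
begin

lemma shatters_iff: "shatters F Y \<longleftrightarrow> (\<forall>W\<subseteq>Y. \<exists>T\<in>F. T \<inter> Y = W)"
proof
  assume "shatters F Y"
  then have e: "{S \<inter> Y | S. S \<in> F} = Pow Y" unfolding shatters_def .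
  show "\<forall>W\<subseteq>Y. \<exists>T\<in>F. T \<inter> Y = W"
  proof (intro allI impI)
    fix W assume "W \<subseteq> Y"
    then have "W \<in> {S \<inter> Y | S. S \<in> F}" unfolding e by simp
    then show "\<exists>T\<in>F. T \<inter> Y = W" by auto
  qed
next
  assume a: "\<forall>W\<subseteq>Y. \<exists>T\<in>F. T \<inter> Y = W"
  have "{S \<inter> Y | S. S \<in> F} \<subseteq> Pow Y" by auto
  moreover have "Pow Y \<subseteq> {S \<inter> Y | S. S \<in> F}"
  proof
    fix W assume "W \<in> Pow Y"
    then obtain T where "T \<in> F" "T \<inter> Y = W" using a by auto
    then show "W \<in> {S \<inter> Y | S. S \<in> F}" by auto
  qed
  ultimately show "shatters F Y" unfolding shatters_def by (rule subset_antisym)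
qed

definition shf :: "'a \<Rightarrow> 'a set \<Rightarrow> 'a set set \<Rightarrow> 'a set" where
 "shf i S A = (if i \<in> S \<and> S - {i} \<notin> A then S - {i} else S)"

definition Dsh :: "'a \<Rightarrow> 'a set set \<Rightarrow> 'a set set" where
 "Dsh i A = (\<lambda>S. shf i S A) ` A"

lemma shf_ch: "i \<in> S \<and> S - {i} \<notin> A \<Longrightarrow> shf i S A = S - {i}"
  by (simp add: shf_def)
lemma shf_same: "\<not> (i \<in> S \<and> S - {i} \<notin> A) \<Longrightarrow> shf i S A = S"
  unfolding shf_def by (rule if_not_P)

lemma shf_inj: "inj_on (\<lambda>S. shf i S A) A"
proof (rule inj_onI)
  fix S S' assume a: "S \<in> A" "S' \<in> A" "shf i S A = shf i S' A"
  show "S = S'"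
  proof (cases "i \<in> S \<and> S - {i} \<notin> A")
    case True
    show ?thesis
    proof (cases "i \<in> S' \<and> S' - {i} \<notin> A")
      case True2: True
      then have "S - {i} = S' - {i}" using a True shf_ch[OF True] shf_ch[OF True2] by simp
      then show ?thesis using True True2 by (metis insert_Diff)
    next
      case False
      then have "S - {i} = S'" using a True shf_ch[OF True] shf_same[OF False] by simp
      then show ?thesis using a True by simp
    qed
  next
    case False
    show ?thesis
    proof (cases "i \<in> S' \<and> S' - {i} \<notin> A")
      case True2: True
      then have "S = S' - {i}" using a False shf_ch[OF True2] shf_same[OF False] by simp
      then show ?thesis using a True2 by simp
    next
      case False2: False
      then show ?thesis using a shf_same[OF False] shf_same[OF False2] by simp
    qed
  qed
qed

lemma D_cases:
  assumes "S \<in> Dsh i A"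
  shows "(S \<in> A \<and> S - {i} \<in> A \<and> insert i S \<in> A) \<or> (i \<notin> S \<and> (\<exists>S0\<in>A. S0 - {i} = S))"
proof -
  obtain S0 where S0: "S0 \<in> A" "S = shf i S0 A" using assms unfolding Dsh_def by blast
  show ?thesis
  proof (cases "i \<in> S0 \<and> S0 - {i} \<notin> A")
    case True
    then show ?thesis using S0 by (auto simp: shf_def)
  next
    case False
    then have S: "S = S0" using S0 shf_same[OF False] by simp
    show ?thesis
    proof (cases "i \<in> S0")
      case True
      then show ?thesis using False S S0 by (simp add: insert_absorb)
    next
      case False2: False
      then show ?thesis using S S0 by auto
    qed
  qed
qed

lemma sd_mem: "S \<in> A \<Longrightarrow> T \<in> symdiff_pow A k \<Longrightarrow> (S - T) \<union> (T - S) \<in> symdiff_pow A (Suc k)"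
  by auto

lemma sd_cong:
  assumes "X - {i} = X' - {i}" "Y - {i} = Y' - {i}"
  shows "((X - Y) \<union> (Y - X)) - {i} = ((X' - Y') \<union> (Y' - X')) - {i}"
proof -
  have m: "\<And>X Y. ((X - Y) \<union> (Y - X)) - {i} = ((X - {i}) - (Y - {i})) \<union> ((Y - {i}) - (X - {i}))"
    by blast
  show ?thesis unfolding m assms ..
qed

lemma sd_in: "i \<in> (X - Y) \<union> (Y - X) \<longleftrightarrow> (i \<in> X \<longleftrightarrow> i \<notin> Y)"
  by blast

lemma D_symdiff:
  assumes "T \<in> symdiff_pow (Dsh i A) k"
  shows "(\<exists>T1\<in>symdiff_pow A k. \<exists>T2\<in>symdiff_pow A k. T1 - {i} = T - {i} \<and> T2 - {i} = T - {i} \<and> i \<in> T1 \<and> i \<notin> T2)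
       \<or> (i \<notin> T \<and> (\<exists>T'\<in>symdiff_pow A k. T' - {i} = T - {i}))"
  using assms
proof (induction k arbitrary: T)
  case 0 then show ?case by simp
next
  case (Suc k)
  then obtain S T0 where T: "T = (S - T0) \<union> (T0 - S)" and S: "S \<in> Dsh i A"
    and T0: "T0 \<in> symdiff_pow (Dsh i A) k" by auto
  note IH = Suc.IH[OF T0]
  from IH obtain T0' where T0': "T0' \<in> symdiff_pow A k" "T0' - {i} = T0 - {i}" by blast
  from D_cases[OF S] show ?case
  proof
    assume P: "S \<in> A \<and> S - {i} \<in> A \<and> insert i S \<in> A"
    define U1 where "U1 = ((S - {i}) - T0') \<union> (T0' - (S - {i}))"
    define U2 where "U2 = ((insert i S) - T0') \<union> (T0' - (insert i S))"
    have U: "U1 \<in> symdiff_pow A (Suc k)" "U2 \<in> symdiff_pow A (Suc k)"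
      unfolding U1_def U2_def using sd_mem[of "S - {i}" A T0' k] sd_mem[of "insert i S" A T0' k] P T0'(1) by blast+
    have a1: "(S - {i}) - {i} = S - {i}" by simp
    have a2: "(insert i S) - {i} = S - {i}" by simp
    have e1: "U1 - {i} = T - {i}" unfolding U1_def T by (rule sd_cong[OF a1 T0'(2)])
    have e2: "U2 - {i} = T - {i}" unfolding U2_def T by (rule sd_cong[OF a2 T0'(2)])
    show ?case
    proof (cases "i \<in> T0'")
      case True
      then have "i \<in> U1" "i \<notin> U2" unfolding U1_def U2_def sd_in by simp_all
      then show ?thesis using U e1 e2 by blast
    next
      case False
      then have "i \<notin> U1" "i \<in> U2" unfolding U1_def U2_def sd_in by simp_all
      then show ?thesis using U e1 e2 by blast
    qed
  next
    assume Q: "i \<notin> S \<and> (\<exists>S0\<in>A. S0 - {i} = S)"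
    then obtain S0 where S0: "S0 \<in> A" "S0 - {i} = S" "i \<notin> S" by blast
    have S0': "S0 - {i} = S - {i}" using S0 by simp
    from IH show ?case
    proof
      assume "\<exists>T1\<in>symdiff_pow A k. \<exists>T2\<in>symdiff_pow A k. T1 - {i} = T0 - {i} \<and> T2 - {i} = T0 - {i} \<and> i \<in> T1 \<and> i \<notin> T2"
      then obtain T1 T2 where T12: "T1\<in>symdiff_pow A k" "T2\<in>symdiff_pow A k" "T1 - {i} = T0 - {i}"
        "T2 - {i} = T0 - {i}" "i \<in> T1" "i \<notin> T2" by blast
      define U1 where "U1 = (S0 - T1) \<union> (T1 - S0)"
      define U2 where "U2 = (S0 - T2) \<union> (T2 - S0)"
      have U: "U1 \<in> symdiff_pow A (Suc k)" "U2 \<in> symdiff_pow A (Suc k)"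
        unfolding U1_def U2_def using sd_mem[OF S0(1) T12(1)] sd_mem[OF S0(1) T12(2)] by blast+
      have e1: "U1 - {i} = T - {i}" unfolding U1_def T by (rule sd_cong[OF S0' T12(3)])
      have e2: "U2 - {i} = T - {i}" unfolding U2_def T by (rule sd_cong[OF S0' T12(4)])
      show ?case
      proof (cases "i \<in> S0")
        case True
        then have "i \<notin> U1" "i \<in> U2" unfolding U1_def U2_def sd_in using T12(5,6) by simp_all
        then show ?thesis using U e1 e2 by blast
      next
        case False
        then have "i \<in> U1" "i \<notin> U2" unfolding U1_def U2_def sd_in using T12(5,6) by simp_all
        then show ?thesis using U e1 e2 by blast
      qed
    next
      assume R: "i \<notin> T0 \<and> (\<exists>T'\<in>symdiff_pow A k. T' - {i} = T0 - {i})"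
      define U where "U = (S0 - T0') \<union> (T0' - S0)"
      have "U \<in> symdiff_pow A (Suc k)" unfolding U_def by (rule sd_mem[OF S0(1) T0'(1)])
      moreover have "U - {i} = T - {i}" unfolding U_def T by (rule sd_cong[OF S0' T0'(2)])
      moreover have "i \<notin> T" unfolding T sd_in using R S0(3) by simp
      ultimately show ?case by blast
    qed
  qed
qed

lemma D_shatters:
  assumes "shatters (symdiff_pow (Dsh i A) k) Y"
  shows "shatters (symdiff_pow A k) Y"
  unfolding shatters_iff
proof (intro allI impI)
  fix W assume W: "W \<subseteq> Y"
  note sh = assms[unfolded shatters_iff, rule_format]
  show "\<exists>T\<in>symdiff_pow A k. T \<inter> Y = W"
  proof (cases "i \<in> Y")
    case True
    obtain T where T: "T \<in> symdiff_pow (Dsh i A) k" "T \<inter> Y = insert i W"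
      using sh[of "insert i W"] W True by blast
    then have "i \<in> T" by blast
    with D_symdiff[OF T(1)] obtain T1 T2 where T12: "T1\<in>symdiff_pow A k" "T2\<in>symdiff_pow A k" "T1 - {i} = T - {i}"
        "T2 - {i} = T - {i}" "i \<in> T1" "i \<notin> T2" by blast
    show ?thesis
    proof (cases "i \<in> W")
      case True
      have "T1 \<inter> Y = W"
      proof -
        have "T1 \<inter> Y = insert i ((T1 - {i}) \<inter> Y)" using T12 \<open>i \<in> Y\<close> by blast
        also have "\<dots> = insert i ((T - {i}) \<inter> Y)" using T12 by simp
        also have "\<dots> = W" using T True by blast
        finally show ?thesis .
      qed
      then show ?thesis using T12 by blast
    next
      case False
      have "T2 \<inter> Y = W"
      proof -
        have "T2 \<inter> Y = ((T2 - {i}) \<inter> Y)" using T12 by blast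
        also have "\<dots> = ((T - {i}) \<inter> Y)" using T12 by simp
        also have "\<dots> = W" using T False by blast
        finally show ?thesis .
      qed
      then show ?thesis using T12 by blast
    qed
  next
    case False
    obtain T where T: "T \<in> symdiff_pow (Dsh i A) k" "T \<inter> Y = W"
      using sh[of W] W by blast
    from D_symdiff[OF T(1)] obtain T' where T': "T' \<in> symdiff_pow A k" "T' - {i} = T - {i}" by blast
    have "T' \<inter> Y = (T' - {i}) \<inter> Y" using False by blast
    also have "\<dots> = (T - {i}) \<inter> Y" using T' by simp
    also have "\<dots> = W" using T False by blast
    finally show ?thesis using T' by blast
  qed
qed

lemma shift_to_hereditary:
  fixes X :: "'a set"
  assumes "finite X"
  shows "A \<subseteq> Pow X \<Longrightarrow> \<exists>B. B \<subseteq> Pow X \<and> card B = card A \<and> (\<forall>S\<in>B. \<forall>i\<in>S. S - {i} \<in> B)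
     \<and> (\<forall>Y. shatters (symdiff_pow B k) Y \<longrightarrow> shatters (symdiff_pow A k) Y)"
proof (induction "\<Sum>S\<in>A. card S" arbitrary: A rule: less_induct)
  case less
  show ?case
  proof (cases "\<forall>S\<in>A. \<forall>i\<in>S. S - {i} \<in> A")
    case True then show ?thesis using less.prems by blast
  next
    case False
    then obtain S0 i where S0: "S0 \<in> A" "i \<in> S0" "S0 - {i} \<notin> A" by blast
    have finA: "finite A" using less.prems assms by (meson finite_Pow_iff finite_subset)
    have DP: "Dsh i A \<subseteq> Pow X" using less.prems unfolding Dsh_def shf_def by auto
    have cardD: "card (Dsh i A) = card A" unfolding Dsh_def using card_image[OF shf_inj] .
    have w: "(\<Sum>S\<in>Dsh i A. card S) < (\<Sum>S\<in>A. card S)"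
    proof -
      have "(\<Sum>S\<in>Dsh i A. card S) = (\<Sum>S\<in>A. card (shf i S A))"
        unfolding Dsh_def using sum.reindex[OF shf_inj] by (simp add: o_def)
      also have "\<dots> < (\<Sum>S\<in>A. card S)"
      proof (rule sum_strict_mono_ex1[OF finA])
        show "\<forall>x\<in>A. card (shf i x A) \<le> card x"
          using less.prems assms by (auto simp: shf_def intro!: card_mono intro: finite_subset)
        have "finite S0" using less.prems assms S0 by (meson PowD finite_subset subsetD)
        then have "card (shf i S0 A) < card S0" using S0 shf_ch[of i S0 A] card_Diff1_less[OF \<open>finite S0\<close> S0(2)] by simp
        then show "\<exists>a\<in>A. card (shf i a A) < card a" using S0 by blast
      qed
      finally show ?thesis .
    qed
    from less.hyps[OF w DP] obtain B where B: "B \<subseteq> Pow X" "card B = card (Dsh i A)"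
      "\<forall>S\<in>B. \<forall>i\<in>S. S - {i} \<in> B"
      "\<forall>Y. shatters (symdiff_pow B k) Y \<longrightarrow> shatters (symdiff_pow (Dsh i A) k) Y" by blast
    then show ?thesis using cardD D_shatters by metis
  qed
qed

lemma hered_full:
  assumes H: "\<forall>S\<in>B. \<forall>i\<in>S. S - {i} \<in> B" and fin: "\<forall>S\<in>B. finite S"
  shows "S \<in> B \<Longrightarrow> S' \<subseteq> S \<Longrightarrow> S' \<in> B"
proof (induction "card (S - S')" arbitrary: S rule: less_induct)
  case less
  show ?case
  proof (cases "S - S' = {}")
    case True then show ?thesis using less.prems by (metis Diff_eq_empty_iff subset_antisym)
  next
    case False
    then obtain i where i: "i \<in> S" "i \<notin> S'" by blast
    have "S - {i} \<in> B" using H less.prems i by blast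
    moreover have "S' \<subseteq> S - {i}" using less.prems i by blast
    moreover have "card ((S - {i}) - S') < card (S - S')"
    proof -
      have "(S - {i}) - S' = (S - S') - {i}" by blast
      moreover have "finite (S - S')" using fin less.prems by blast
      ultimately show ?thesis using i card_Diff1_less[of "S - S'" i] by simp
    qed
    ultimately show ?thesis using less.hyps by blast
  qed
qed

lemma union_in_symdiff:
  assumes H: "\<And>S S'. S \<in> B \<Longrightarrow> S' \<subseteq> S \<Longrightarrow> S' \<in> B"
  shows "U \<in> union_pow B k \<Longrightarrow> W \<subseteq> U \<Longrightarrow> W \<in> symdiff_pow B k"
proof (induction k arbitrary: U W)
  case 0 then show ?case by auto
next
  case (Suc k)
  then obtain S U0 where U: "U = S \<union> U0" "S \<in> B" "U0 \<in> union_pow B k" by auto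
  have "W \<inter> S \<in> B" using H U by blast
  moreover have "W - S \<in> symdiff_pow B k" using Suc U by blast
  moreover have "W = ((W \<inter> S) - (W - S)) \<union> ((W - S) - (W \<inter> S))" by blast
  ultimately show ?case by auto
qed

lemma symdiff_in_union:
  "T \<in> symdiff_pow F k \<Longrightarrow> \<exists>U\<in>union_pow F k. T \<subseteq> U"
proof (induction k arbitrary: T)
  case 0 then show ?case by auto
next
  case (Suc k)
  then obtain S T0 where T: "T = (S - T0) \<union> (T0 - S)" "S \<in> F" "T0 \<in> symdiff_pow F k" by auto
  then obtain U0 where "U0 \<in> union_pow F k" "T0 \<subseteq> U0" using Suc.IH by blast
  then have "S \<union> U0 \<in> union_pow F (Suc k)" "T \<subseteq> S \<union> U0" using T by auto
  then show ?case by blast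
qed

lemma union_pow_sub: "F \<subseteq> Pow X \<Longrightarrow> union_pow F k \<subseteq> Pow X"
  by (induction k) auto

lemma VC_upper:
  assumes "Y \<subseteq> {1..n}" "shatters F Y"
  shows "card Y \<le> VC n F"
proof -
  have bdd: "bdd_above {card Y | Y. Y \<subseteq> {1..n} \<and> shatters F Y}"
    by (rule bdd_aboveI[of _ n]) (auto dest: card_mono[OF finite_atLeastAtMost])
  show ?thesis unfolding VC_def using assms by (intro cSup_upper[OF _ bdd]) auto
qed

theorem theorem5:
  fixes n k d :: nat
  assumes "0 < n" "0 < k" "0 < d" "d < n"
  shows "(\<forall>A. A \<subseteq> Pow {1..n} \<and> VC n (symdiff_pow A k) \<le> d \<longrightarrow> card A \<le> p n k d)
       \<and> (\<exists>A. A \<subseteq> Pow {1..n} \<and> VC n (symdiff_pow A k) \<le> d \<and> card A = p n k d)"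
proof -
  let ?C = "{card F | F. kwise_union_family n k d F}"
  have finC: "finite ?C"
  proof -
    have "?C \<subseteq> card ` Pow (Pow {1..n})" unfolding kwise_union_family_def by auto
    then show ?thesis by (rule finite_subset) simp
  qed
  have neC: "?C \<noteq> {}"
  proof -
    have "kwise_union_family n k d {}" unfolding kwise_union_family_def using assms(2)
      by (cases k) auto
    then show ?thesis by blast
  qed
  have part1: "card A \<le> p n k d" if A: "A \<subseteq> Pow {1..n}" "VC n (symdiff_pow A k) \<le> d" for A
  proof -
    have ex: "\<exists>B. B \<subseteq> Pow {1..n} \<and> card B = card A \<and> (\<forall>S\<in>B. \<forall>i\<in>S. S - {i} \<in> B)
     \<and> (\<forall>Y. shatters (symdiff_pow B k) Y \<longrightarrow> shatters (symdiff_pow A k) Y)"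
      by (rule shift_to_hereditary[OF finite_atLeastAtMost A(1), where k=k])
    then obtain B where B: "B \<subseteq> Pow {1..n}" "card B = card A" "\<forall>S\<in>B. \<forall>i\<in>S. S - {i} \<in> B"
      "\<forall>Y. shatters (symdiff_pow B k) Y \<longrightarrow> shatters (symdiff_pow A k) Y"
      by (elim exE conjE) (rule that)
    have finB: "\<forall>S\<in>B. finite S" using B(1) by (meson PowD finite_atLeastAtMost finite_subset subsetD)
    have H: "\<And>S S'. S \<in> B \<Longrightarrow> S' \<subseteq> S \<Longrightarrow> S' \<in> B" by (rule hered_full[OF B(3) finB])
    have "kwise_union_family n k d B"
      unfolding kwise_union_family_def
    proof (intro conjI ballI)
      show "B \<subseteq> Pow {1..n}" by fact
      fix U assume U: "U \<in> union_pow B k"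
      have Usub: "U \<subseteq> {1..n}" using union_pow_sub[OF B(1)] U by blast
      have "shatters (symdiff_pow B k) U"
        unfolding shatters_iff
      proof (intro allI impI)
        fix W assume W: "W \<subseteq> U"
        have "W \<in> symdiff_pow B k" by (rule union_in_symdiff[OF H U W])
        moreover have "W \<inter> U = W" using W by (rule Int_absorb2)
        ultimately show "\<exists>T\<in>symdiff_pow B k. T \<inter> U = W" by (rule bexI[rotated])
      qed
      then have "shatters (symdiff_pow A k) U" by (rule B(4)[rule_format])
      then have "card U \<le> VC n (symdiff_pow A k)" by (rule VC_upper[OF Usub])
      then show "card U \<le> d" using A(2) by simp
    qed
    then have "card B \<in> ?C" by blast
    then have "card B \<le> Max ?C" by (rule Max_ge[OF finC])
    then show ?thesis unfolding p_def using B(2) by simp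
  qed
  obtain F where F: "kwise_union_family n k d F" "card F = p n k d"
    using Max_in[OF finC neC] unfolding p_def by auto
  have FP: "F \<subseteq> Pow {1..n}" using F(1) unfolding kwise_union_family_def by blast
  have "VC n (symdiff_pow F k) \<le> d"
  proof -
    have all: "c \<le> d" if c_in: "c \<in> {card Y | Y. Y \<subseteq> {1..n} \<and> shatters (symdiff_pow F k) Y}" for c
    proof -
      obtain Y where Y: "c = card Y" "Y \<subseteq> {1..n}" "shatters (symdiff_pow F k) Y" using c_in by blast
      obtain T where T: "T \<in> symdiff_pow F k" "T \<inter> Y = Y" using Y(3) unfolding shatters_iff by blast
      obtain U where U: "U \<in> union_pow F k" "T \<subseteq> U" using symdiff_in_union[OF T(1)] by blast
      have "U \<subseteq> {1..n}" using union_pow_sub[OF FP] U by blast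
      then have finU: "finite U" by (rule finite_subset[OF _ finite_atLeastAtMost])
      have "Y \<subseteq> U" using T U by blast
      then have "card Y \<le> card U" by (rule card_mono[OF finU])
      also have "card U \<le> d" using F(1) U unfolding kwise_union_family_def by blast
      finally show ?thesis using Y by simp
    qed
    show ?thesis unfolding VC_def
    proof (cases "{card Y | Y. Y \<subseteq> {1..n} \<and> shatters (symdiff_pow F k) Y} = {}")
      case True
      then show "Sup {card Y | Y. Y \<subseteq> {1..n} \<and> shatters (symdiff_pow F k) Y} \<le> d"
        unfolding True Sup_nat_empty by simp
    next
      case False
      show "Sup {card Y | Y. Y \<subseteq> {1..n} \<and> shatters (symdiff_pow F k) Y} \<le> d"
        by (rule cSup_least[OF False all])
    qed
  qed
  then have ex: "\<exists>A. A \<subseteq> Pow {1..n} \<and> VC n (symdiff_pow A k) \<le> d \<and> card A = p n k d"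
    using FP F(2) by blast
  have "\<forall>A. A \<subseteq> Pow {1..n} \<and> VC n (symdiff_pow A k) \<le> d \<longrightarrow> card A \<le> p n k d"
    using part1 by blast
  then show ?thesis using ex by (rule conjI)
qed

end
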